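(* Let $p \in \mathbb{R}^3$ and let $x_i \sim \mathcal{N}(\mu_i, \sigma_i^2 I_3)$ be a normal random vector in $\mathbb{R}^3$ with $\mu_i \neq p$ and $\sigma_i > 0$, and let $\mathrm{d}(p,x_i) = \left\langle x_i - p, \frac{\mu_i - p}{\|\mu_i - p\|_2}\right\rangle$. Fix $\varepsilon \in (0,1)$ and a cutoff distance $d_s > 0$. For $\delta \in [0,\infty)$ let $C_\delta = \left(-\infty, \frac{d_s}{1+\delta}\right)$, and define \[ \mathcal{A}_\varepsilon(\mathrm{d}(p,x_i)) = \sup\left\{ \delta \geq 0 \;\middle|\; \mathrm{AV@R}_\varepsilon(\mathrm{d}(p,x_i)) \in C_\delta \right\} \in [0,\infty]. \] Let $\mu = \|\mu_i - p\|_2$, $\iota_\varepsilon = \mathrm{erf}^{-1}(2\varepsilon - 1)$ and $\kappa_\varepsilon = \left(\sqrt{2\pi}\,\varepsilon \exp(\iota_\varepsilon^2)\right)^{-1}$. Then \[ \mathcal{A}_\varepsilon(\mathrm{d}(p,x_i)) = \begin{cases} 0, & \text{if } \frac{\mu - d_s}{\sigma_i} \geq \kappa_\varepsilon,\\[2pt] \dfrac{d_s}{\mu - \kappa_\varepsilon \sigma_i} - 1, & \text{if } \kappa_\varepsilon \in \left(\frac{\mu - d_s}{\sigma_i}, \frac{\mu}{\sigma_i}\right),\\[2pt] \infty, & \text{if } \frac{\mu}{\sigma_i} \leq \kappa_\varepsilon. \end{cases} \]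
   Context: For a continuous real random variable $y$ and $\varepsilon\in(0,1)$: $\mathrm{V@R}_\varepsilon(y) := \inf\{z \mid \mathbb{P}\{y<z\} > \varepsilon\}$ and $\mathrm{AV@R}_\varepsilon(y) := \mathbb{E}[y \mid y < \mathrm{V@R}_\varepsilon(y)]$. $\mathrm{erf}(x) = \frac{2}{\sqrt{\pi}}\int_0^x e^{-t^2}dt$ with inverse $\mathrm{erf}^{-1}:(-1,1)\to\mathbb{R}$. The supremum in the definition of $\mathcal{A}_\varepsilon$ is taken in $[0,\infty]$, with the convention that the supremum of the empty set is $0$. *)

theory Defs
  imports "HOL-Probability.Probability"
begin

definition erf :: "real \<Rightarrow> real" where
  "erf x = 2 / sqrt pi * (LBINT t=0..x. exp (- t\<^sup>2))"

definition erf_inv :: "real \<Rightarrow> real" where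
  "erf_inv y = (THE x. erf x = y)"

definition VaR :: "'a measure \<Rightarrow> ('a \<Rightarrow> real) \<Rightarrow> real \<Rightarrow> real" where
  "VaR M Y eps = Inf {z. measure M {w \<in> space M. Y w < z} > eps}"

definition AVaR :: "'a measure \<Rightarrow> ('a \<Rightarrow> real) \<Rightarrow> real \<Rightarrow> real" where
  "AVaR M Y eps =
     (let A = {w \<in> space M. Y w < VaR M Y eps}
      in (\<integral>w. Y w * indicator A w \<partial>M) / measure M A)"

definition C_set :: "real \<Rightarrow> real \<Rightarrow> real set" where
  "C_set ds \<delta> = {..< ds / (1 + \<delta>)}"

text \<open>Supremum taken in [0,\<infinity>] (ennreal), so Sup of the empty set is 0.\<close>
definition risk_A :: "'a measure \<Rightarrow> ('a \<Rightarrow> real) \<Rightarrow> real \<Rightarrow> real \<Rightarrow> ennreal" where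
  "risk_A M Y eps ds = (SUP \<delta> \<in> {\<delta>::real. \<delta> \<ge> 0 \<and> AVaR M Y eps \<in> C_set ds \<delta>}. ennreal \<delta>)"

definition dist_proj :: "real^3 \<Rightarrow> real^3 \<Rightarrow> real^3 \<Rightarrow> real" where
  "dist_proj p \<mu> x = inner (x - p) ((1 / norm (\<mu> - p)) *\<^sub>R (\<mu> - p))"

end

theory Submission
  imports Defs "HOL-Real_Asymp.Real_Asymp"
begin


lemma dist_proj_normal:
  fixes M :: "'a measure" and X :: "'a \<Rightarrow> real^3"
    and p \<mu>i :: "real^3" and \<sigma> :: real
  assumes "prob_space M"
    and ind: "prob_space.indep_vars M (\<lambda>_. borel) (\<lambda>j w. X w $ j) UNIV"
    and nd: "\<And>j. distributed M lborel (\<lambda>w. X w $ j) (\<lambda>t. ennreal (normal_density (\<mu>i $ j) \<sigma> t))"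
    and "\<mu>i \<noteq> p" and sp: "\<sigma> > 0"
  shows "distributed M lborel (\<lambda>w. dist_proj p \<mu>i (X w)) (\<lambda>t. ennreal (normal_density (norm (\<mu>i - p)) \<sigma> t))"
proof -
  interpret prob_space M by fact
  define m where "m = norm (\<mu>i - p)"
  have mpos: "m > 0" using assms(4) by (simp add: m_def)
  define u where "u = (1 / m) *\<^sub>R (\<mu>i - p)"
  have nu: "norm u = 1" using mpos by (simp add: u_def m_def)
  define I where "I = {j. u $ j \<noteq> 0}"
  have "u \<noteq> 0" using nu by auto
  then have Ine: "I \<noteq> {}" unfolding I_def by (metis (mono_tags) Collect_empty_eq vec_eq_iff zero_index)
  define Y where "Y = (\<lambda>j w. (- p $ j * u $ j) + u $ j * X w $ j)"
  have D: "dist_proj p \<mu>i (X w) = (\<Sum>j\<in>I. Y j w)" for w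
  proof -
    have "dist_proj p \<mu>i (X w) = (\<Sum>j\<in>UNIV. Y j w)"
      unfolding dist_proj_def u_def[symmetric] m_def[symmetric] inner_vec_def Y_def
      by (simp add: algebra_simps)
    also have "\<dots> = (\<Sum>j\<in>I. Y j w)"
      by (rule sum.mono_neutral_right) (auto simp: I_def Y_def)
    finally show ?thesis .
  qed
  have indY: "indep_vars (\<lambda>_. borel) Y I"
  proof -
    have "indep_vars (\<lambda>_. borel) (\<lambda>j w. X w $ j) I"
      by (rule indep_vars_subset[OF ind]) auto
    from indep_vars_compose2[OF this, of "\<lambda>j x. (- p $ j * u $ j) + u $ j * x" "\<lambda>_. borel"]
    show ?thesis unfolding Y_def by simp
  qed
  have dY: "distributed M lborel (Y j) (normal_density (- p $ j * u $ j + u $ j * \<mu>i $ j) (\<bar>u $ j\<bar> * \<sigma>))"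
    if "j \<in> I" for j
    unfolding Y_def using normal_density_affine[OF nd sp, of "u $ j" "- p $ j * u $ j"] that
    by (simp add: I_def)
  have "distributed M lborel (\<lambda>x. \<Sum>i\<in>I. Y i x)
     (normal_density (\<Sum>j\<in>I. - p $ j * u $ j + u $ j * \<mu>i $ j) (sqrt (\<Sum>j\<in>I. (\<bar>u $ j\<bar> * \<sigma>)\<^sup>2)))"
    by (rule sum_indep_normal[OF _ Ine indY _ dY]) (auto simp: I_def sp)
  moreover have "(\<Sum>j\<in>I. - p $ j * u $ j + u $ j * \<mu>i $ j) = m"
  proof -
    have "(\<Sum>j\<in>I. - p $ j * u $ j + u $ j * \<mu>i $ j) = (\<Sum>j\<in>UNIV. - p $ j * u $ j + u $ j * \<mu>i $ j)"
      by (rule sum.mono_neutral_left) (auto simp: I_def)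
    also have "\<dots> = inner (\<mu>i - p) u" unfolding inner_vec_def by (simp add: algebra_simps)
    also have "\<dots> = m" using mpos by (simp add: u_def m_def power2_norm_eq_inner[symmetric] power2_eq_square)
    finally show ?thesis .
  qed
  moreover have "sqrt (\<Sum>j\<in>I. (\<bar>u $ j\<bar> * \<sigma>)\<^sup>2) = \<sigma>"
  proof -
    have "(\<Sum>j\<in>I. (\<bar>u $ j\<bar> * \<sigma>)\<^sup>2) = (\<Sum>j\<in>UNIV. (\<bar>u $ j\<bar> * \<sigma>)\<^sup>2)"
      by (rule sum.mono_neutral_left) (auto simp: I_def)
    also have "\<dots> = \<sigma>\<^sup>2 * inner u u" unfolding inner_vec_def
      by (simp add: sum_distrib_left power_mult_distrib power2_eq_square algebra_simps)
    also have "\<dots> = \<sigma>\<^sup>2" using nu by (simp add: power2_norm_eq_inner[symmetric])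
    finally show ?thesis using sp by simp
  qed
  ultimately show ?thesis unfolding D m_def by simp
qed



lemma erf_deriv: "(erf has_real_derivative (2 / sqrt pi * exp (- x\<^sup>2))) (at x)"
proof -
  let ?a = "- \<bar>x\<bar> - 1" and ?b = "\<bar>x\<bar> + 1"
  have "((\<lambda>u. LBINT y=ereal 0..u. exp (- y\<^sup>2)) has_vector_derivative (exp (- x\<^sup>2))) (at x within {?a..?b})"
    by (rule interval_integral_FTC2) (auto intro!: continuous_intros)
  then have "((\<lambda>u. LBINT y=ereal 0..u. exp (- y\<^sup>2)) has_real_derivative (exp (- x\<^sup>2))) (at x)"
    by (subst (asm) at_within_Icc_at) (auto simp: has_real_derivative_iff_has_vector_derivative)
  from DERIV_cmult[OF this, of "2 / sqrt pi"] show ?thesis unfolding erf_def[abs_def] zero_ereal_def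
    by simp
qed

lemma erf_0: "erf 0 = 0" by (simp add: erf_def zero_ereal_def)

lemma erf_deriv_chain[derivative_intros]:
  "(g has_real_derivative g') (at x within s) \<Longrightarrow>
   ((\<lambda>x. erf (g x)) has_real_derivative (2 / sqrt pi * exp (- (g x)\<^sup>2) * g')) (at x within s)"
  by (rule DERIV_chain2[OF erf_deriv])

lemma erf_odd: "erf (- x) = - erf x"
proof -
  have "\<forall>x. ((\<lambda>x. erf x + erf (- x)) has_real_derivative 0) (at x)"
    by (auto intro!: derivative_eq_intros erf_deriv)
  from DERIV_isconst_all[OF this, of x 0] show ?thesis by (simp add: erf_0)
qed

lemma erf_mono_strict: "x < y \<Longrightarrow> erf x < erf y"
  by (rule DERIV_pos_imp_increasing) (auto intro!: erf_deriv)

lemma isCont_erf: "isCont erf x"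
  using erf_deriv DERIV_isCont by blast


lemma normal_measure_Ioc:
  assumes "\<sigma> > 0" "a \<le> b"
  shows "measure (density lborel (\<lambda>x. ennreal (normal_density m \<sigma> x))) {a<..b}
     = (1 + erf ((b - m) / (\<sigma> * sqrt 2))) / 2 - (1 + erf ((a - m) / (\<sigma> * sqrt 2))) / 2"
proof -
  define G where "G = (\<lambda>z. (1 + erf ((z - m) / (\<sigma> * sqrt 2))) / 2)"
  have dG: "(G has_real_derivative normal_density m \<sigma> x) (at x)" for x
  proof -
    have "(G has_real_derivative (1/2 * (2 / sqrt pi * exp (- ((x - m) / (\<sigma> * sqrt 2))\<^sup>2) * (1 / (\<sigma> * sqrt 2))))) (at x)"
      unfolding G_def using assms by (auto intro!: derivative_eq_intros)
    moreover have "1/2 * (2 / sqrt pi * exp (- ((x - m) / (\<sigma> * sqrt 2))\<^sup>2) * (1 / (\<sigma> * sqrt 2))) = normal_density m \<sigma> x"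
      using assms unfolding normal_density_def
      by (simp add: power_divide power_mult_distrib real_sqrt_mult field_simps)
    ultimately show ?thesis by simp
  qed
  have "measure (density lborel (\<lambda>x. ennreal (normal_density m \<sigma> x))) {a<..b}
      = (\<integral>x. indicator {a<..b} x \<partial>density lborel (\<lambda>x. ennreal (normal_density m \<sigma> x)))"
    by simp
  also have "\<dots> = (\<integral>x. normal_density m \<sigma> x *\<^sub>R indicator {a<..b} x \<partial>lborel)"
    by (rule integral_density) auto
  also have "\<dots> = (LBINT x:{a<..b}. normal_density m \<sigma> x)"
    unfolding set_lebesgue_integral_def by (simp add: mult.commute)
  also have "\<dots> = (LBINT x=a..b. normal_density m \<sigma> x)"
    using assms by (simp add: interval_integral_Ioc)
  also have "\<dots> = G b - G a"
  proof (rule interval_integral_FTC_finite)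
    show "continuous_on {min a b..max a b} (normal_density m \<sigma>)"
      using assms by (auto simp: normal_density_def intro!: continuous_intros)
    fix x show "(G has_vector_derivative normal_density m \<sigma> x) (at x within {min a b..max a b})"
      using DERIV_subset[OF dG] by (simp add: has_real_derivative_iff_has_vector_derivative)
  qed
  finally show ?thesis unfolding G_def .
qed


lemma normal_cdf:
  assumes sp: "\<sigma> > 0"
  shows "cdf (density lborel (\<lambda>x. ennreal (normal_density m \<sigma> x))) z = (1 + erf ((z - m) / (\<sigma> * sqrt 2))) / 2"
proof -
  define N where "N = density lborel (\<lambda>x. ennreal (normal_density m \<sigma> x))"
  define G where "G = (\<lambda>z. (1 + erf ((z - m) / (\<sigma> * sqrt 2))) / 2)"
  interpret N: real_distribution N
    unfolding N_def real_distribution_def real_distribution_axioms_def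
    using prob_space_normal_density sp by auto
  have diff: "cdf N b - cdf N a = G b - G a" for a b
  proof (cases a b rule: linorder_cases)
    case less
    then show ?thesis using N.cdf_diff_eq[OF less] normal_measure_Ioc[OF sp, of a b m]
      unfolding N_def G_def by simp
  next
    case greater
    then show ?thesis using N.cdf_diff_eq[OF greater] normal_measure_Ioc[OF sp, of b a m]
      unfolding N_def G_def by simp
  qed simp
  define c where "c = cdf N 0 - G 0"
  have cG: "cdf N z = G z + c" for z using diff[of z 0] unfolding c_def by simp
  have sym: "G (2*m - z) = 1 - G z" for z
  proof -
    have "(2*m - z - m) / (\<sigma> * sqrt 2) = - ((z - m) / (\<sigma> * sqrt 2))"
      by (metis (no_types) diff_diff_eq2 minus_diff_eq minus_divide_left mult_2 add_diff_cancel_left)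
    then show ?thesis unfolding G_def by (simp add: erf_odd field_simps)
  qed
  have l1: "(G \<longlongrightarrow> - c) at_bot"
  proof -
    have "((\<lambda>z. cdf N z - c) \<longlongrightarrow> 0 - c) at_bot"
      by (intro tendsto_diff N.cdf_lim_at_bot tendsto_const)
    then show ?thesis using cG by simp
  qed
  have f: "filterlim (\<lambda>z::real. 2*m - z) at_top at_bot" by real_asymp
  have l2: "((\<lambda>z. G (2*m - z)) \<longlongrightarrow> 1 - c) at_bot"
  proof -
    have "((\<lambda>z. cdf N (2*m - z)) \<longlongrightarrow> 1) at_bot"
      by (rule filterlim_compose[OF N.cdf_lim_at_top_prob f])
    then have "((\<lambda>z. cdf N (2*m - z) - c) \<longlongrightarrow> 1 - c) at_bot"
      by (intro tendsto_diff tendsto_const)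
    then show ?thesis using cG by simp
  qed
  have l3: "((\<lambda>z. G (2*m - z)) \<longlongrightarrow> 1 - - c) at_bot"
    unfolding sym by (intro tendsto_diff tendsto_const l1)
  have "1 - c = 1 - - c" by (rule tendsto_unique[OF _ l2 l3]) simp
  then have "c = 0" by simp
  then show ?thesis using cG unfolding N_def G_def by simp
qed


lemma erf_surj:
  assumes "-1 < y" "y < 1"
  shows "\<exists>x. erf x = y"
proof -
  define N where "N = density lborel (\<lambda>x. ennreal (normal_density 0 1 x))"
  interpret N: real_distribution N
    unfolding N_def real_distribution_def real_distribution_axioms_def
    using prob_space_normal_density by auto
  have c: "cdf N z = (1 + erf (z / sqrt 2)) / 2" for z
    using normal_cdf[of 1 0 z] unfolding N_def by simp
  have "eventually (\<lambda>z. cdf N z < (1 + y) / 2) at_bot"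
    using order_tendstoD(2)[OF N.cdf_lim_at_bot, of "(1+y)/2"] assms by simp
  then obtain a where a: "cdf N a < (1 + y) / 2" by (auto simp: eventually_at_bot_linorder)
  have "eventually (\<lambda>z. cdf N z > (1 + y) / 2) at_top"
    using order_tendstoD(1)[OF N.cdf_lim_at_top_prob, of "(1+y)/2"] assms by simp
  then obtain b where b: "cdf N b > (1 + y) / 2" by (auto simp: eventually_at_top_linorder)
  have ea: "erf (a / sqrt 2) < y" and eb: "erf (b / sqrt 2) > y" using a b c by auto
  have "a / sqrt 2 \<le> b / sqrt 2"
  proof (rule ccontr)
    assume "\<not> a / sqrt 2 \<le> b / sqrt 2"
    then have "erf (b / sqrt 2) < erf (a / sqrt 2)" by (intro erf_mono_strict) simp
    with ea eb show False by simp
  qed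
  from IVT'[of erf "a / sqrt 2" y "b / sqrt 2", OF less_imp_le[OF ea] less_imp_le[OF eb] this]
  show ?thesis using isCont_erf by (auto intro: continuous_at_imp_continuous_on)
qed

lemma erf_erf_inv:
  assumes "-1 < y" "y < 1"
  shows "erf (erf_inv y) = y"
proof -
  obtain x where x: "erf x = y" using erf_surj[OF assms] by blast
  have "(THE x. erf x = y) = x"
  proof (rule the_equality)
    fix x' assume "erf x' = y"
    then show "x' = x" using x erf_mono_strict[of x x'] erf_mono_strict[of x' x]
      by (cases x x' rule: linorder_cases) auto
  qed (rule x)
  then show ?thesis unfolding erf_inv_def using x by simp
qed


lemma normal_density_deriv:
  assumes sp: "\<sigma> > 0"
  shows "(normal_density m \<sigma> has_real_derivative (- (x - m) / \<sigma>\<^sup>2 * normal_density m \<sigma> x)) (at x)"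
proof -
  have "((\<lambda>x. -(x - m)\<^sup>2/ (2 * \<sigma>\<^sup>2)) has_real_derivative (- (x - m) / \<sigma>\<^sup>2)) (at x)"
    using sp by (auto intro!: derivative_eq_intros simp: field_simps power2_eq_square)
  from DERIV_cmult[OF DERIV_fun_exp[OF this], of "1 / sqrt (2 * pi * \<sigma>\<^sup>2)"]
  show ?thesis unfolding normal_density_def[abs_def]
    by (simp add: mult_ac)
qed

lemma nd_lim_bot:
  assumes sp: "\<sigma> > 0"
  shows "(normal_density m \<sigma> \<longlongrightarrow> 0) at_bot"
  unfolding normal_density_def[abs_def] using sp by real_asymp


lemma normal_trunc_integral:
  assumes sp: "\<sigma> > 0"
  shows "(\<integral>x. normal_density m \<sigma> x * (x * indicator {..<v} x) \<partial>lborel)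
     = m * ((1 + erf ((v - m) / (\<sigma> * sqrt 2))) / 2) - \<sigma>\<^sup>2 * normal_density m \<sigma> v"
proof -
  define G where "G = (\<lambda>z. (1 + erf ((z - m) / (\<sigma> * sqrt 2))) / 2)"
  define F where "F = (\<lambda>x. m * G x - \<sigma>\<^sup>2 * normal_density m \<sigma> x)"
  define f where "f = (\<lambda>x. x * normal_density m \<sigma> x)"
  define N where "N = density lborel (\<lambda>x. ennreal (normal_density m \<sigma> x))"
  interpret N: real_distribution N
    unfolding N_def real_distribution_def real_distribution_axioms_def
    using prob_space_normal_density sp by auto
  have GN: "G = cdf N" using normal_cdf[OF sp] unfolding G_def N_def by auto
  have dG: "(G has_real_derivative normal_density m \<sigma> x) (at x)" for x
  proof -
    have "(G has_real_derivative (1/2 * (2 / sqrt pi * exp (- ((x - m) / (\<sigma> * sqrt 2))\<^sup>2) * (1 / (\<sigma> * sqrt 2))))) (at x)"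
      unfolding G_def using sp by (auto intro!: derivative_eq_intros)
    moreover have "1/2 * (2 / sqrt pi * exp (- ((x - m) / (\<sigma> * sqrt 2))\<^sup>2) * (1 / (\<sigma> * sqrt 2))) = normal_density m \<sigma> x"
      using sp unfolding normal_density_def
      by (simp add: power_divide power_mult_distrib real_sqrt_mult field_simps)
    ultimately show ?thesis by simp
  qed
  have dF: "(F has_real_derivative f x) (at x)" for x
  proof -
    have "(F has_real_derivative (m * normal_density m \<sigma> x - \<sigma>\<^sup>2 * (- (x - m) / \<sigma>\<^sup>2 * normal_density m \<sigma> x))) (at x)"
      unfolding F_def by (intro DERIV_diff DERIV_cmult dG normal_density_deriv sp)
    moreover have "m * normal_density m \<sigma> x - \<sigma>\<^sup>2 * (- (x - m) / \<sigma>\<^sup>2 * normal_density m \<sigma> x) = f x"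
      using sp unfolding f_def by (simp add: field_simps)
    ultimately show ?thesis by simp
  qed
  have contF: "isCont F x" for x using dF DERIV_isCont by blast
  have "(LBINT x=-\<infinity>..ereal v. f x) = F v - 0"
  proof (rule interval_integral_FTC_integrable)
    show "- \<infinity> < ereal v" by simp
    fix x show "(F has_vector_derivative f x) (at x)"
      using dF by (simp add: has_real_derivative_iff_has_vector_derivative)
  next
    fix x show "isCont f x" unfolding f_def normal_density_def using sp by (auto intro!: continuous_intros)
  next
    show "set_integrable lborel (einterval (- \<infinity>) (ereal v)) f"
      unfolding set_integrable_def f_def
      by (rule integrable_mult_indicator) (auto simp: mult.commute[of _ "normal_density m \<sigma> _"] integrable_normal_moment_nz_1[OF sp])
  next
    have "(G \<longlongrightarrow> 0) at_bot" unfolding GN by (rule N.cdf_lim_at_bot)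
    then have "(F \<longlongrightarrow> m * 0 - \<sigma>\<^sup>2 * 0) at_bot" unfolding F_def
      by (intro tendsto_intros nd_lim_bot sp)
    then show "((F \<circ> real_of_ereal) \<longlongrightarrow> 0) (at_right (- \<infinity>))"
      by (simp add: ereal_tendsto_simps1)
  next
    have "(F \<longlongrightarrow> F v) (at v)" using contF isCont_def by blast
    then have "(F \<longlongrightarrow> F v) (at_left v)" by (rule tendsto_mono[OF at_le, rotated]) simp
    then show "((F \<circ> real_of_ereal) \<longlongrightarrow> F v) (at_left (ereal v))"
      by (simp add: ereal_tendsto_simps1)
  qed
  moreover have "(LBINT x=-\<infinity>..ereal v. f x) = (\<integral>x. normal_density m \<sigma> x * (x * indicator {..<v} x) \<partial>lborel)"
    unfolding interval_lebesgue_integral_def set_lebesgue_integral_def f_def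
    by (auto intro!: Bochner_Integration.integral_cong simp: indicator_def)
  ultimately show ?thesis unfolding F_def G_def by simp
qed



lemma sup_lemma:
  fixes a ds :: real
  assumes ds: "ds > 0"
  shows "(SUP \<delta> \<in> {\<delta>::real. \<delta> \<ge> 0 \<and> a \<in> C_set ds \<delta>}. ennreal \<delta>) =
    (if a \<ge> ds then 0 else if a \<le> 0 then \<infinity> else ennreal (ds / a - 1))"
proof -
  have mem: "a \<in> C_set ds \<delta> \<longleftrightarrow> a * (1 + \<delta>) < ds" if "\<delta> \<ge> 0" for \<delta>
    using that by (simp add: C_set_def pos_less_divide_eq)
  consider "a \<ge> ds" | "a \<le> 0" | "0 < a" "a < ds" by linarith
  then show ?thesis
  proof cases
    case 1
    have "{\<delta>::real. \<delta> \<ge> 0 \<and> a \<in> C_set ds \<delta>} = {}"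
    proof -
      have "\<not> a * (1 + \<delta>) < ds" if "\<delta> \<ge> 0" for \<delta>
      proof -
        have "ds \<le> a * 1" using 1 by simp
        also have "\<dots> \<le> a * (1 + \<delta>)" using 1 ds that by (intro mult_left_mono) auto
        finally show ?thesis by simp
      qed
      then show ?thesis using mem by auto
    qed
    then show ?thesis using 1 by (simp del: Collect_empty_eq add: bot_ennreal)
  next
    case 2
    have S: "{\<delta>::real. \<delta> \<ge> 0 \<and> a \<in> C_set ds \<delta>} = {0..}"
    proof -
      have "a * (1 + \<delta>) < ds" if "\<delta> \<ge> 0" for \<delta>
      proof -
        have "a * (1 + \<delta>) \<le> 0" using 2 that by (simp add: mult_nonpos_nonneg)
        then show ?thesis using ds by simp
      qed
      then show ?thesis using mem by auto
    qed
    have "(SUP \<delta> \<in> {0::real..}. ennreal \<delta>) = \<top>"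
    proof (subst SUP_eq_top_iff, intro allI impI)
      fix x :: ennreal assume "x < \<top>"
      then obtain r where r: "x = ennreal r" "r \<ge> 0" by (cases x rule: ennreal_cases) auto
      show "\<exists>i\<in>{0..}. x < ennreal i"
        by (rule bexI[of _ "r + 1"]) (use r in \<open>auto simp: ennreal_less_iff\<close>)
    qed
    then show ?thesis using 2 ds S by auto
  next
    case 3
    define T where "T = ds / a - 1"
    have T: "T > 0" using 3 by (simp add: T_def)
    have S: "{\<delta>::real. \<delta> \<ge> 0 \<and> a \<in> C_set ds \<delta>} = {0..<T}"
    proof -
      have "a * (1 + \<delta>) < ds \<longleftrightarrow> \<delta> < T" for \<delta>
        using 3 unfolding T_def by (simp add: field_simps)
      then show ?thesis using mem by auto
    qed
    have "(SUP \<delta> \<in> {0..<T}. ennreal \<delta>) = ennreal T"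
    proof (rule antisym)
      show "(SUP \<delta> \<in> {0..<T}. ennreal \<delta>) \<le> ennreal T"
        by (rule SUP_least) (auto intro: ennreal_leI)
      have "ennreal (SUP \<delta> \<in> {0..<T}. \<delta>) = (SUP \<delta> \<in> {0..<T}. ennreal \<delta>)"
      proof (rule ennreal_SUP)
        have "(SUP \<delta> \<in> {0..<T}. ennreal \<delta>) \<le> ennreal T"
          by (rule SUP_least) (auto intro: ennreal_leI)
        then show "(SUP \<delta> \<in> {0..<T}. ennreal \<delta>) \<noteq> \<top>" by (rule neq_top_trans[OF ennreal_neq_top])
        show "{0..<T} \<noteq> {}" using T by simp
      qed
      moreover have "(SUP \<delta> \<in> {0..<T}. \<delta>) = T" using T by simp
      ultimately show "ennreal T \<le> (SUP \<delta> \<in> {0..<T}. ennreal \<delta>)" by simp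
    qed
    then show ?thesis using 3 S T_def by auto
  qed
qed


lemma isCont_erf_comp[continuous_intros]: "isCont g x \<Longrightarrow> isCont (\<lambda>x. erf (g x)) x"
  by (rule isCont_o2[OF _ isCont_erf])

lemma erf_less_iff: "erf x < erf y \<longleftrightarrow> x < y"
proof (cases x y rule: linorder_cases)
  case greater
  then show ?thesis using erf_mono_strict[OF greater] by auto
qed (auto intro: erf_mono_strict)

theorem corollary1:
  fixes M :: "'a measure" and X :: "'a \<Rightarrow> real^3"
    and p \<mu>i :: "real^3" and \<sigma> eps ds :: real
  assumes "prob_space M"
    and "prob_space.indep_vars M (\<lambda>_. borel) (\<lambda>j w. X w $ j) UNIV"
    and "\<And>j. distributed M lborel (\<lambda>w. X w $ j) (\<lambda>t. ennreal (normal_density (\<mu>i $ j) \<sigma> t))"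
    and "\<mu>i \<noteq> p" and "\<sigma> > 0"
    and "0 < eps" and "eps < 1" and "ds > 0"
  shows
    "let m = norm (\<mu>i - p);
         \<iota> = erf_inv (2 * eps - 1);
         \<kappa> = 1 / (sqrt (2 * pi) * eps * exp (\<iota>\<^sup>2));
         A = risk_A M (\<lambda>w. dist_proj p \<mu>i (X w)) eps ds
     in ((m - ds) / \<sigma> \<ge> \<kappa> \<longrightarrow> A = 0)
      \<and> ((m - ds) / \<sigma> < \<kappa> \<and> \<kappa> < m / \<sigma> \<longrightarrow> A = ennreal (ds / (m - \<kappa> * \<sigma>) - 1))
      \<and> (m / \<sigma> \<le> \<kappa> \<longrightarrow> A = \<infinity>)"
proof -
  interpret prob_space M by fact
  note sp = \<open>\<sigma> > 0\<close>
  define m where "m = norm (\<mu>i - p)"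
  define \<iota> where "\<iota> = erf_inv (2 * eps - 1)"
  define \<kappa> where "\<kappa> = 1 / (sqrt (2 * pi) * eps * exp (\<iota>\<^sup>2))"
  define D where "D = (\<lambda>w. dist_proj p \<mu>i (X w))"
  have dD: "distributed M lborel D (\<lambda>t. ennreal (normal_density m \<sigma> t))"
    unfolding D_def m_def by (rule dist_proj_normal[OF assms(1-5)])
  define G where "G = (\<lambda>z. (1 + erf ((z - m) / (\<sigma> * sqrt 2))) / 2)"
  define N where "N = density lborel (\<lambda>x. ennreal (normal_density m \<sigma> x))"
  interpret N: real_distribution N
    unfolding N_def real_distribution_def real_distribution_axioms_def
    using prob_space_normal_density sp by auto
  have GN: "cdf N = G" using normal_cdf[OF sp] unfolding G_def N_def by auto
  have DN: "distr M lborel D = N" unfolding N_def by (rule distributed_distr_eq_density[OF dD])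
  have Dmeas[measurable]: "D \<in> borel_measurable M"
    using distributed_measurable[OF dD] by simp
  have PD: "measure M {w\<in>space M. D w < z} = G z" for z
  proof -
    have "measure M {w\<in>space M. D w < z} = measure (distr M lborel D) {..<z}"
      by (subst measure_distr) (auto intro!: arg_cong[where f="measure M"])
    also have "\<dots> = measure N {..<z}" by (simp add: DN)
    also have "\<dots> = G z"
    proof (rule tendsto_unique[OF _ N.cdf_at_left])
      show "at_left z \<noteq> bot" by simp
      have "isCont G z" unfolding G_def using sp by (intro continuous_intros) auto
      then have "(G \<longlongrightarrow> G z) (at_left z)"
        by (rule tendsto_mono[OF at_le, rotated, OF isContD]) simp
      then show "(cdf N \<longlongrightarrow> G z) (at_left z)" by (simp add: GN)
    qed
    finally show ?thesis .
  qed
  have erfi: "erf \<iota> = 2 * eps - 1" unfolding \<iota>_def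
    by (rule erf_erf_inv) (use assms in auto)
  define v where "v = m + \<sigma> * sqrt 2 * \<iota>"
  have vi: "(v - m) / (\<sigma> * sqrt 2) = \<iota>" unfolding v_def using sp by simp
  have Gv: "G v = eps" unfolding G_def vi erfi by simp
  have Gless: "eps < G z \<longleftrightarrow> v < z" for z
  proof -
    have "eps < G z \<longleftrightarrow> erf \<iota> < erf ((z - m) / (\<sigma> * sqrt 2))"
      unfolding G_def erfi by auto
    also have "\<dots> \<longleftrightarrow> \<iota> < (z - m) / (\<sigma> * sqrt 2)" by (rule erf_less_iff)
    also have "\<dots> \<longleftrightarrow> v < z" unfolding v_def using sp
      by (simp add: pos_less_divide_eq algebra_simps)
    finally show ?thesis .
  qed
  have VaR: "VaR M D eps = v"
  proof -
    have "{z. measure M {w\<in>space M. D w < z} > eps} = {v<..}"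
      using PD Gless by auto
    then show ?thesis unfolding VaR_def by simp
  qed
  define A where "A = {w \<in> space M. D w < v}"
  have mA: "measure M A = eps" unfolding A_def PD Gv ..
  have intA: "(\<integral>w. D w * indicator A w \<partial>M) = m * eps - \<sigma>\<^sup>2 * normal_density m \<sigma> v"
  proof -
    have "(\<integral>w. D w * indicator A w \<partial>M) = (\<integral>w. (\<lambda>x. x * indicator {..<v} x) (D w) \<partial>M)"
      by (rule Bochner_Integration.integral_cong) (auto simp: A_def indicator_def)
    also have "\<dots> = (\<integral>x. normal_density m \<sigma> x * (x * indicator {..<v} x) \<partial>lborel)"
      by (rule distributed_integral[OF dD, symmetric]) auto
    also have "\<dots> = m * eps - \<sigma>\<^sup>2 * normal_density m \<sigma> v"
      using normal_trunc_integral[OF sp, of m v] Gv unfolding G_def by simp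
    finally show ?thesis .
  qed
  have ndv: "normal_density m \<sigma> v = 1 / (\<sigma> * sqrt (2 * pi) * exp (\<iota>\<^sup>2))"
  proof -
    have "(v - m)\<^sup>2 / (2 * \<sigma>\<^sup>2) = \<iota>\<^sup>2" unfolding v_def using sp
      by (simp add: power_mult_distrib)
    moreover have "sqrt (2 * pi * \<sigma>\<^sup>2) = \<sigma> * sqrt (2 * pi)" using sp
      by (simp add: real_sqrt_mult)
    ultimately show ?thesis unfolding normal_density_def
      by (simp add: exp_minus field_simps)
  qed
  have AV: "AVaR M D eps = m - \<kappa> * \<sigma>"
  proof -
    have "AVaR M D eps = (m * eps - \<sigma>\<^sup>2 * normal_density m \<sigma> v) / eps"
      unfolding AVaR_def Let_def VaR A_def[symmetric] intA mA ..
    also have "\<dots> = m - \<kappa> * \<sigma>" unfolding ndv \<kappa>_def using sp assms(6)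
      by (simp add: field_simps power2_eq_square)
    finally show ?thesis .
  qed
  have RA: "risk_A M D eps ds = (if m - \<kappa> * \<sigma> \<ge> ds then 0 else if m - \<kappa> * \<sigma> \<le> 0 then \<infinity>
      else ennreal (ds / (m - \<kappa> * \<sigma>) - 1))"
    unfolding risk_A_def AV by (rule sup_lemma) (use assms in auto)
  have c1: "(m - ds) / \<sigma> \<ge> \<kappa> \<longleftrightarrow> m - \<kappa> * \<sigma> \<ge> ds" using sp by (simp add: pos_le_divide_eq algebra_simps)
  have c2: "(m - ds) / \<sigma> < \<kappa> \<longleftrightarrow> \<not> m - \<kappa> * \<sigma> \<ge> ds" using sp by (simp add: pos_divide_less_eq algebra_simps not_le)
  have c3: "\<kappa> < m / \<sigma> \<longleftrightarrow> \<not> m - \<kappa> * \<sigma> \<le> 0" using sp by (simp add: pos_less_divide_eq algebra_simps not_le)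
  have c4: "m / \<sigma> \<le> \<kappa> \<longleftrightarrow> m - \<kappa> * \<sigma> \<le> 0" using sp by (simp add: pos_divide_le_eq algebra_simps)
  have "m - \<kappa> * \<sigma> \<le> 0 \<Longrightarrow> \<not> m - \<kappa> * \<sigma> \<ge> ds" using assms(8) by linarith
  then show ?thesis unfolding Let_def m_def[symmetric] \<iota>_def[symmetric] \<kappa>_def[symmetric] D_def[symmetric]
    using RA c1 c2 c3 c4 by auto
qed

end
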